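(* For every integer $n>16$, the generalized Petersen graph $GP(n,3)$ is not $2$-distance-balanced.
   Context: For a connected graph $G$ and $x,y\in V(G)$, $d_G(x,y)$ denotes the distance. Let $W_{xy}=\{w\in V(G): d_G(w,x)<d_G(w,y)\}$. $G$ is called $\ell$-distance-balanced if $|W_{xy}|=|W_{yx}|$ for every pair $x,y\in V(G)$ with $d_G(x,y)=\ell$. For integers $n\ge 3$ and $1\le k<n/2$, the generalized Petersen graph $GP(n,k)$ has vertex set $\{u_i: i\in\mathbb{Z}_n\}\cup\{v_i: i\in\mathbb{Z}_n\}$ and edge set $\{u_iu_{i+1}: i\in\mathbb{Z}_n\}\cup\{v_iv_{i+k}: i\in\mathbb{Z}_n\}\cup\{u_iv_i: i\in\mathbb{Z}_n\}$. *)

theory Defs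
  imports Main
begin

fun walk :: "'a set \<Rightarrow> ('a \<Rightarrow> 'a \<Rightarrow> bool) \<Rightarrow> 'a \<Rightarrow> 'a \<Rightarrow> nat \<Rightarrow> bool" where
  "walk V E x y 0 \<longleftrightarrow> x \<in> V \<and> x = y"
| "walk V E x y (Suc m) \<longleftrightarrow> x \<in> V \<and> (\<exists>z\<in>V. E x z \<and> walk V E z y m)"

definition gdist :: "'a set \<Rightarrow> ('a \<Rightarrow> 'a \<Rightarrow> bool) \<Rightarrow> 'a \<Rightarrow> 'a \<Rightarrow> nat" where
  "gdist V E x y = (LEAST m. walk V E x y m)"

definition Wset :: "'a set \<Rightarrow> ('a \<Rightarrow> 'a \<Rightarrow> bool) \<Rightarrow> 'a \<Rightarrow> 'a \<Rightarrow> 'a set" where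
  "Wset V E x y = {w \<in> V. gdist V E w x < gdist V E w y}"

definition distance_balanced :: "nat \<Rightarrow> 'a set \<Rightarrow> ('a \<Rightarrow> 'a \<Rightarrow> bool) \<Rightarrow> bool" where
  "distance_balanced l V E \<longleftrightarrow>
     (\<forall>x\<in>V. \<forall>y\<in>V. gdist V E x y = l \<longrightarrow> card (Wset V E x y) = card (Wset V E y x))"

text \<open>Generalized Petersen graph GP(n,k): vertex (False,i) is u_i, (True,i) is v_i,
indices in {0..<n} taken modulo n.\<close>
definition GP_V :: "nat \<Rightarrow> (bool \<times> nat) set" where
  "GP_V n = UNIV \<times> {0..<n}"

definition GP_E :: "nat \<Rightarrow> nat \<Rightarrow> bool \<times> nat \<Rightarrow> bool \<times> nat \<Rightarrow> bool" where
  "GP_E n k a b \<longleftrightarrow>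
     (case (a, b) of
        ((False, i), (False, j)) \<Rightarrow> j = (i + 1) mod n \<or> i = (j + 1) mod n
      | ((True, i), (True, j)) \<Rightarrow> j = (i + k) mod n \<or> i = (j + k) mod n
      | ((_, i), (_, j)) \<Rightarrow> i = j)"

end

theory Submission imports Defs begin
definition g :: "nat \<Rightarrow> nat" where "g j = j div 3 + j mod 3"
definition hu where "hu j = min j (2 + g j)"
definition hv where "hv j = 1 + g j"
definition hvv where "hvv j = (if j mod 3 = 0 then j div 3 else 2 + g j)"
definition near :: "nat \<Rightarrow> nat \<Rightarrow> bool" where "near a b \<longleftrightarrow> a \<le> b + 1 \<and> b \<le> a + 1"

lemma near_sym: "near a b \<Longrightarrow> near b a" by (auto simp: near_def)
lemma near_min: "near a b \<Longrightarrow> near c d \<Longrightarrow> near (min a c) (min b d)"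
  by (auto simp: near_def)

lemma g3: "g (3*a + c) = a + g c" unfolding g_def by simp
lemma hv3: "hv (3*a + c) = a + hv c" unfolding hv_def by (simp add: g3)
lemma hvv3: "hvv (3*a + c) = a + hvv c" unfolding hvv_def g_def by auto

lemma j3E: fixes j :: nat obtains a where "j = 3*a" | a where "j = 3*a+1" | a where "j = 3*a+2"
proof -
  have "j = 3*(j div 3) + j mod 3" by simp
  moreover have "j mod 3 = 0 \<or> j mod 3 = 1 \<or> j mod 3 = 2" by linarith
  ultimately consider "j = 3*(j div 3)" | "j = 3*(j div 3) + 1" | "j = 3*(j div 3) + 2" by fastforce
  then show ?thesis using that by metis
qed

lemma g_vals: "g 0 = 0" "g 1 = 1" "g 2 = 2" "g 3 = 1" "g 4 = 2" "g 5 = 3" "g (Suc 0) = 1" "g (Suc (Suc 0)) = 2" by (simp_all add: g_def)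

lemma gS3: "g (Suc (Suc (Suc j))) = g j + 1" unfolding g_def by simp
lemma g_le: "g j \<le> j" unfolding g_def by linarith
lemma g_ge: "j div 3 \<le> g j" unfolding g_def by linarith
lemma g_ub: "g j \<le> j div 3 + 2" unfolding g_def by linarith

lemma hu_alt: "hu j = (if j < 3 then j else 2 + g j)"
proof (cases j rule: j3E)
  case (1 a) then show ?thesis using g3[of a 0] by (cases a) (auto simp: hu_def g_vals)
next
  case (2 a) then show ?thesis using g3[of a 1] by (cases a) (auto simp: hu_def g_vals)
next
  case (3 a) then show ?thesis using g3[of a 2] by (cases a) (auto simp: hu_def g_vals)
qed

lemma g_near: "near (g (j+1)) (g j)"
proof (cases j rule: j3E)
  case (1 a) then show ?thesis using g3[of a 0] g3[of a 1] by (simp add: near_def g_vals)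
next
  case (2 a) then show ?thesis using g3[of a 2] g3[of a 1] by (simp add: near_def g_vals)
next
  case (3 a) then show ?thesis using g3[of a 2] gS3[of "3*a"] g3[of a 0] by (simp add: near_def g_vals)
qed

lemma hv_near1: "near (hv (j+1)) (hv j)" using g_near[of j] by (simp add: hv_def near_def)
lemma hv_near3: "near (hv (j+3)) (hv j)" using hv3[of 1 j] by (simp add: near_def add.commute)
lemma hv_p3: "hv (j+3) = hv j + 1" using hv3[of 1 j] by (simp add: add.commute)
lemma hvv_p3: "hvv (j+3) = hvv j + 1" using hvv3[of 1 j] by (simp add: add.commute)
lemma hvv_near3: "near (hvv (j+3)) (hvv j)" using hvv_p3[of j] by (simp add: near_def)
lemma hu_p3: "3 \<le> j \<Longrightarrow> hu (j+3) = hu j + 1" using g3[of 1 j] by (simp add: hu_alt add.commute)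
lemma hu_near1: "near (hu (j+1)) (hu j)"
  using g_near[of j] g_le[of j] g_le[of "j+1"] by (auto simp: hu_def near_def)

lemma hv_hvv_near: "near (hv j) (hvv j)"
  unfolding hv_def hvv_def near_def g_def by auto
lemma hu_hv_near: "near (hu j) (hv j)"
  using g_le[of j] by (auto simp: hu_def hv_def near_def)

lemma hv_bounds: "j div 3 \<le> hv j" "hv j \<le> j div 3 + 3" using g_ge[of j] g_ub[of j] by (simp_all add: hv_def)
lemma hvv_bounds: "j div 3 \<le> hvv j" "hvv j \<le> j div 3 + 4" using g_ge[of j] g_ub[of j] by (simp_all add: hvv_def)
lemma hu_bounds: "j div 3 \<le> hu j" "hu j \<le> j div 3 + 4" using g_ge[of j] g_ub[of j] by (auto simp add: hu_def)

lemma small3: "j \<le> 3 \<Longrightarrow> j = 0 \<or> j = 1 \<or> j = 2 \<or> j = (3::nat)" by auto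

lemma hv_desc: "(1 \<le> j \<and> hv (j-1) + 1 = hv j) \<or> hvv j + 1 = hv j"
proof (cases j rule: j3E)
  case (1 a) then show ?thesis using hvv3[of a 0] hv3[of a 0] by (simp add: hv_def hvv_def g_vals)
next
  case (2 a) then show ?thesis using hv3[of a 0] hv3[of a 1] by (simp add: hv_def g_vals)
next
  case (3 a) then show ?thesis using hv3[of a 1] hv3[of a 2] by (simp add: hv_def g_vals)
qed

lemma hvv_desc: "j \<noteq> 0 \<Longrightarrow> (3 \<le> j \<and> hvv (j-3) + 1 = hvv j) \<or> hv j + 1 = hvv j"
proof (cases j rule: j3E)
  case (1 a) assume "j \<noteq> 0" then show ?thesis using 1 hvv3[of "a-1" 0] hvv3[of a 0]
    by (cases a) (simp_all add: hvv_def)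
next
  case (2 a) then show ?thesis using hvv3[of a 1] hv3[of a 1] by (simp add: hv_def hvv_def g_vals)
next
  case (3 a) then show ?thesis using hvv3[of a 2] hv3[of a 2] by (simp add: hv_def hvv_def g_vals)
qed

lemma hu_desc: "1 \<le> j \<Longrightarrow> (1 \<le> j \<and> hu (j-1) + 1 = hu j) \<or> hv j + 1 = hu j"
proof -
  assume j: "1 \<le> j"
  show ?thesis
  proof (cases "j < 3")
    case True then have "j = 1 \<or> j = 2" using j by auto
    then show ?thesis by (auto simp: hu_alt g_vals)
  next
    case False
    then show ?thesis by (simp add: hu_alt hv_def)
  qed
qed

lemma hv_desc3: "(3 \<le> j \<and> hv (j-3) + 1 = hv j) \<or> hu j + 1 = hv j"
proof (cases "j < 3")
  case True then have "j = 0 \<or> j = 1 \<or> j = 2" by auto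
  then show ?thesis by (auto simp: hu_alt hv_def g_vals)
next
  case False
  then show ?thesis using hv_p3[of "j-3"] by simp
qed

lemma small_vals: "hu 0 = 0" "hvv 0 = 0" "hv 1 = 2" "hv 2 = 3" "hvv 1 = 3" "hvv 2 = 4"
  by (simp_all add: hu_def hv_def hvv_def g_def)

lemma le3_vals: "j \<le> 3 \<Longrightarrow> hu j \<le> 4 \<and> hv j \<le> 4 \<and> hvv j \<le> 4"
  using small3[of j] by (auto simp: hu_def hv_def hvv_def g_def)

lemma ge12_vals: "12 \<le> j \<Longrightarrow> 4 \<le> hu j \<and> 4 \<le> hv j \<and> 4 \<le> hvv j"
proof -
  assume "12 \<le> j"
  then have "4 \<le> j div 3" using div_le_mono[of 12 j 3] by simp
  then show ?thesis using hu_bounds[of j] hv_bounds[of j] hvv_bounds[of j] by linarith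
qed


section \<open>Generic distance certificate\<close>

lemma walk_lb:
  assumes lip: "\<forall>u\<in>V. \<forall>v\<in>V. E u v \<longrightarrow> D u \<le> D v + 1" and x0: "D x = 0"
  shows "walk V E a x m \<Longrightarrow> D a \<le> m"
proof (induction m arbitrary: a)
  case 0 then show ?case using x0 by simp
next
  case (Suc m)
  then obtain z where z: "a \<in> V" "z \<in> V" "E a z" "walk V E z x m" by auto
  then have "D z \<le> m" using Suc.IH by blast
  moreover have "D a \<le> D z + 1" using lip z by blast
  ultimately show ?case by simp
qed

lemma walk_ex:
  assumes xV: "x \<in> V" and x0: "D x = 0"
    and desc: "\<forall>a\<in>V. a \<noteq> x \<longrightarrow> (\<exists>b\<in>V. E a b \<and> D b + 1 = D a)"
  shows "a \<in> V \<Longrightarrow> walk V E a x (D a)"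
proof (induction "D a" arbitrary: a)
  case 0
  have "a = x"
  proof (rule ccontr)
    assume "a \<noteq> x"
    then obtain b where "D b + 1 = D a" using desc 0 by blast
    then show False using 0 by simp
  qed
  then show ?case using 0 xV by simp
next
  case (Suc k)
  have "a \<noteq> x" using Suc x0 by auto
  then obtain b where b: "b \<in> V" "E a b" "D b + 1 = D a" using desc Suc by blast
  then have "walk V E b x (D b)" using Suc by simp
  then have w: "walk V E a x (Suc (D b))" unfolding walk.simps using b Suc.prems by blast
  have "D a = Suc (D b)" using b by simp
  then show ?case using w by simp
qed

lemma gdist_cert:
  assumes xV: "x \<in> V" and x0: "D x = 0"
    and lip: "\<forall>u\<in>V. \<forall>v\<in>V. E u v \<longrightarrow> D u \<le> D v + 1"
    and desc: "\<forall>a\<in>V. a \<noteq> x \<longrightarrow> (\<exists>b\<in>V. E a b \<and> D b + 1 = D a)"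
    and aV: "a \<in> V"
  shows "gdist V E a x = D a"
  unfolding gdist_def
proof (rule Least_equality)
  show "walk V E a x (D a)" using walk_ex[OF xV x0 desc aV] .
next
  fix m assume "walk V E a x m"
  then show "D a \<le> m" using walk_lb[OF lip x0] by blast
qed

section \<open>Generalized Petersen graph GP(n,3)\<close>

definition goodF :: "bool \<Rightarrow> (bool \<Rightarrow> nat \<Rightarrow> nat) \<Rightarrow> bool" where
"goodF t F \<longleftrightarrow> (\<forall>j. near (F False (j+1)) (F False j)) \<and> (\<forall>j. near (F True (j+3)) (F True j))
  \<and> (\<forall>j. near (F False j) (F True j)) \<and> near (F True 1) (F True 2)
  \<and> (\<forall>b j. j \<le> 3 \<longrightarrow> F b j \<le> 4) \<and> (\<forall>b j. 12 \<le> j \<longrightarrow> 4 \<le> F b j) \<and> F t 0 = 0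
  \<and> (\<forall>j. (False,j) \<noteq> (t,0) \<longrightarrow> (1 \<le> j \<and> F False (j-1) + 1 = F False j) \<or> F True j + 1 = F False j)
  \<and> (\<forall>j. (True,j) \<noteq> (t,0) \<longrightarrow> (3 \<le> j \<and> F True (j-3) + 1 = F True j) \<or> F False j + 1 = F True j)"

lemma goodF_D:
  assumes "goodF t F"
  shows "\<And>j. near (F False (j+1)) (F False j)" "\<And>j. near (F True (j+3)) (F True j)"
    "\<And>j. near (F False j) (F True j)" "near (F True 1) (F True 2)"
    "\<And>b j. j \<le> 3 \<Longrightarrow> F b j \<le> 4" "\<And>b j. 12 \<le> j \<Longrightarrow> 4 \<le> F b j" "F t 0 = 0"
    "\<And>j. (False,j) \<noteq> (t,0) \<Longrightarrow> (1 \<le> j \<and> F False (j-1) + 1 = F False j) \<or> F True j + 1 = F False j"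
    "\<And>j. (True,j) \<noteq> (t,0) \<Longrightarrow> (3 \<le> j \<and> F True (j-3) + 1 = F True j) \<or> F False j + 1 = F True j"
proof -
  note H = assms[unfolded goodF_def]
  show "\<And>j. near (F False (j+1)) (F False j)" using H by (elim conjE) blast
  show "\<And>j. near (F True (j+3)) (F True j)" using H by (elim conjE) blast
  show "\<And>j. near (F False j) (F True j)" using H by (elim conjE) blast
  show "near (F True 1) (F True 2)" using H by (elim conjE) assumption
  show "\<And>b j. j \<le> 3 \<Longrightarrow> F b j \<le> 4" using H by (elim conjE) blast
  show "\<And>b j. 12 \<le> j \<Longrightarrow> 4 \<le> F b j" using H by (elim conjE) blast
  show "F t 0 = 0" using H by (elim conjE) assumption
  show "\<And>j. (False,j) \<noteq> (t,0) \<Longrightarrow> (1 \<le> j \<and> F False (j-1) + 1 = F False j) \<or> F True j + 1 = F False j"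
    using H by (elim conjE) blast
  show "\<And>j. (True,j) \<noteq> (t,0) \<Longrightarrow> (3 \<le> j \<and> F True (j-3) + 1 = F True j) \<or> F False j + 1 = F True j"
    using H by (elim conjE) blast
qed

definition Fx :: "bool \<Rightarrow> nat \<Rightarrow> nat" where "Fx b j = (if b then hvv j else hv j)"
definition Fy :: "bool \<Rightarrow> nat \<Rightarrow> nat" where "Fy b j = (if b then hv j else hu j)"


lemma goodFx: "goodF True Fx"
  unfolding goodF_def Fx_def
proof (intro conjI allI impI)
  fix j show "near (if False then hvv (j + 1) else hv (j + 1)) (if False then hvv j else hv j)"
    using hv_near1 by simp
next
  fix j show "near (if True then hvv (j + 3) else hv (j + 3)) (if True then hvv j else hv j)"
    using hvv_near3 by simp
next
  fix j show "near (if False then hvv j else hv j) (if True then hvv j else hv j)"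
    using hv_hvv_near by simp
next
  show "near (if True then hvv 1 else hv 1) (if True then hvv 2 else hv 2)"
    using small_vals by (simp add: near_def)
next
  fix b and j :: nat assume "j \<le> 3" then show "(if b then hvv j else hv j) \<le> 4"
    using le3_vals by simp
next
  fix b and j :: nat assume "12 \<le> j" then show "4 \<le> (if b then hvv j else hv j)"
    using ge12_vals by simp
next
  show "(if True then hvv 0 else hv 0) = 0" using small_vals by simp
next
  fix j :: nat
  show "1 \<le> j \<and> (if False then hvv (j - 1) else hv (j - 1)) + 1 = (if False then hvv j else hv j) \<or>
       (if True then hvv j else hv j) + 1 = (if False then hvv j else hv j)"
    using hv_desc[of j] by simp
next
  fix j :: nat assume "(True, j) \<noteq> (True, 0)"
  then have "j \<noteq> 0" by simp
  then show "3 \<le> j \<and> (if True then hvv (j - 3) else hv (j - 3)) + 1 = (if True then hvv j else hv j) \<or>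
       (if False then hvv j else hv j) + 1 = (if True then hvv j else hv j)"
    using hvv_desc[of j] by simp
qed

lemma goodFy: "goodF False Fy"
  unfolding goodF_def Fy_def
proof (intro conjI allI impI)
  fix j show "near (if False then hv (j + 1) else hu (j + 1)) (if False then hv j else hu j)"
    using hu_near1 by simp
next
  fix j show "near (if True then hv (j + 3) else hu (j + 3)) (if True then hv j else hu j)"
    using hv_near3 by simp
next
  fix j show "near (if False then hv j else hu j) (if True then hv j else hu j)"
    using hu_hv_near by simp
next
  show "near (if True then hv 1 else hu 1) (if True then hv 2 else hu 2)"
    using small_vals by (simp add: near_def)
next
  fix b and j :: nat assume "j \<le> 3" then show "(if b then hv j else hu j) \<le> 4"
    using le3_vals by simp
next
  fix b and j :: nat assume "12 \<le> j" then show "4 \<le> (if b then hv j else hu j)"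
    using ge12_vals by simp
next
  show "(if False then hv 0 else hu 0) = 0" using small_vals by simp
next
  fix j :: nat assume "(False, j) \<noteq> (False, 0)"
  then have "1 \<le> j" by simp
  then show "1 \<le> j \<and> (if False then hv (j - 1) else hu (j - 1)) + 1 = (if False then hv j else hu j) \<or>
       (if True then hv j else hu j) + 1 = (if False then hv j else hu j)"
    using hu_desc[of j] by simp
next
  fix j :: nat
  show "3 \<le> j \<and> (if True then hv (j - 3) else hu (j - 3)) + 1 = (if True then hv j else hu j) \<or>
       (if False then hv j else hu j) + 1 = (if True then hv j else hu j)"
    using hv_desc3[of j] by simp
qed

definition MF :: "(bool \<Rightarrow> nat \<Rightarrow> nat) \<Rightarrow> nat \<Rightarrow> bool \<times> nat \<Rightarrow> nat" where
  "MF F n w = min (F (fst w) (snd w)) (F (fst w) (n - snd w))"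


lemma step1:
  assumes G: "goodF t F" and k: "k < n" and k': "k' = (k+1) mod n"
  shows "near (MF F n (False,k)) (MF F n (False,k'))"
proof (cases "k+1 < n")
  case True
  then have "k' = k+1" using k' by simp
  moreover have "near (F False k) (F False (k+1))" using goodF_D(1)[OF G] near_sym by blast
  moreover have "near (F False (n-k)) (F False (n-(k+1)))"
  proof -
    have e: "(n - (k+1)) + 1 = n - k" using True by simp
    show ?thesis using goodF_D(1)[OF G, of "n-(k+1)"] unfolding e .
  qed
  ultimately show ?thesis unfolding MF_def by (simp add: near_min)
next
  case False
  then have kn: "k + 1 = n" using k by simp
  then have kk: "k = n - 1" "k' = 0" using k' by auto
  have "near (F False (n-1)) (F False n)"
  proof -
    have e: "(n-1) + 1 = n" using k by simp
    show ?thesis using near_sym[OF goodF_D(1)[OF G, of "n-1"]] unfolding e .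
  qed
  moreover have "near (F False 1) (F False 0)" using goodF_D(1)[OF G, of 0] by simp
  ultimately have "near (min (F False (n-1)) (F False 1)) (min (F False n) (F False 0))"
    by (rule near_min)
  then show ?thesis using kk k unfolding MF_def by (simp add: min.commute)
qed

lemma step3:
  assumes G: "goodF t F" and n: "17 \<le> n" and k: "k < n" and k': "k' = (k+3) mod n"
  shows "near (MF F n (True,k)) (MF F n (True,k'))"
proof (cases "k+3 < n")
  case True
  then have "k' = k+3" using k' by simp
  moreover have "near (F True k) (F True (k+3))" using goodF_D(2)[OF G] near_sym by blast
  moreover have "near (F True (n-k)) (F True (n-(k+3)))"
  proof -
    have e: "(n - (k+3)) + 3 = n - k" using True by simp
    show ?thesis using goodF_D(2)[OF G, of "n-(k+3)"] unfolding e .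
  qed
  ultimately show ?thesis unfolding MF_def by (simp add: near_min)
next
  case False
  then have kk: "k' = k + 3 - n"
  proof -
    have "n \<le> k + 3" using False by simp
    moreover have "k + 3 - n < n" using k n by simp
    moreover have "k + 3 = (k + 3 - n) + n" using False by simp
    ultimately show ?thesis using k' by (metis mod_add_self2 mod_less)
  qed
  have nk: "n - k = 1 \<or> n - k = 2 \<or> n - k = 3" using False k by linarith
  have c1: "near (F True (n-k)) (F True k')"
  proof -
    have A: "near (F True 3) (F True 0)" using goodF_D(2)[OF G, of 0] by simp
    have B: "near (F True 1) (F True 2)" using goodF_D(4)[OF G] .
    from nk show ?thesis
    proof (elim disjE)
      assume "n - k = 1" then have "k' = 2" using kk k by simp
      then show ?thesis using B \<open>n - k = 1\<close> by simp
    next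
      assume "n - k = 2" then have "k' = 1" using kk k by simp
      then show ?thesis using near_sym[OF B] \<open>n - k = 2\<close> by simp
    next
      assume "n - k = 3" then have "k' = 0" using kk k by simp
      then show ?thesis using A \<open>n - k = 3\<close> by simp
    qed
  qed
  have k'2: "k' \<le> 2" using kk nk k by linarith
  have b1: "F True (n-k) \<le> 4" "F True k' \<le> 4"
    using goodF_D(5)[OF G, of "n-k" True] goodF_D(5)[OF G, of k' True] nk k'2 by linarith+
  have b2: "4 \<le> F True k" "4 \<le> F True (n-k')"
    using goodF_D(6)[OF G, of k True] goodF_D(6)[OF G, of "n-k'" True] nk k'2 n k by linarith+
  have "MF F n (True,k) = F True (n-k)" "MF F n (True,k') = F True k'"
    using b1 b2 unfolding MF_def by (simp_all add: min_def)
  then show ?thesis using c1 by simp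
qed

lemma spoke:
  assumes G: "goodF t F"
  shows "near (MF F n (False,k)) (MF F n (True,k))"
  using goodF_D(3)[OF G] unfolding MF_def by (simp add: near_min)

lemma GP_E_cases:
  "GP_E n 3 (b,k) (b',k') \<longleftrightarrow>
    (b = False \<and> b' = False \<and> (k' = (k+1) mod n \<or> k = (k'+1) mod n))
  \<or> (b = True \<and> b' = True \<and> (k' = (k+3) mod n \<or> k = (k'+3) mod n))
  \<or> (b \<noteq> b' \<and> k = k')"
  unfolding GP_E_def by (cases b; cases b') auto

lemma GP_lip:
  assumes G: "goodF t F" and n: "17 \<le> n" and a: "a \<in> GP_V n" and a': "a' \<in> GP_V n"
    and E: "GP_E n 3 a a'"
  shows "near (MF F n a) (MF F n a')"
proof -
  obtain b k where bk: "a = (b,k)" by force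
  obtain b' k' where bk': "a' = (b',k')" by force
  have k: "k < n" "k' < n" using a a' bk bk' by (auto simp: GP_V_def)
  have "(b = False \<and> b' = False \<and> (k' = (k+1) mod n \<or> k = (k'+1) mod n))
  \<or> (b = True \<and> b' = True \<and> (k' = (k+3) mod n \<or> k = (k'+3) mod n))
  \<or> (b \<noteq> b' \<and> k = k')" using E bk bk' GP_E_cases by simp
  then show ?thesis
  proof (elim disjE conjE)
    assume "b = False" "b' = False" "k' = (k+1) mod n" then show ?thesis
      using step1[OF G k(1)] bk bk' by simp
  next
    assume "b = False" "b' = False" "k = (k'+1) mod n" then show ?thesis
      using step1[OF G k(2)] bk bk' near_sym by simp
  next
    assume "b = True" "b' = True" "k' = (k+3) mod n" then show ?thesis
      using step3[OF G n k(1)] bk bk' by simp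
  next
    assume "b = True" "b' = True" "k = (k'+3) mod n" then show ?thesis
      using step3[OF G n k(2)] bk bk' near_sym by simp
  next
    assume "b \<noteq> b'" "k = k'" then show ?thesis
      using spoke[OF G, of n k] bk bk' near_sym by (cases b) auto
  qed
qed


lemma E_sym: "GP_E n 3 a b \<Longrightarrow> GP_E n 3 b a"
  unfolding GP_E_def by (cases a; cases b) (auto split: bool.splits)

lemma GP_desc:
  assumes G: "goodF t F" and n: "17 \<le> n" and a: "a \<in> GP_V n" and ne: "a \<noteq> (t,0)"
  shows "\<exists>a'\<in>GP_V n. GP_E n 3 a a' \<and> MF F n a' + 1 = MF F n a"
proof -
  obtain b k where bk: "a = (b,k)" by force
  have k: "k < n" using a bk by (auto simp: GP_V_def)
  have key: "\<exists>a'\<in>GP_V n. GP_E n 3 a a' \<and> MF F n a' + 1 \<le> MF F n a"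
  proof (cases "F b k \<le> F b (n-k)")
    case True
    then have M: "MF F n a = F b k" using bk by (simp add: MF_def)
    show ?thesis
    proof (cases b)
      case False
      from goodF_D(8)[OF G, of k] ne bk False
      have "(1 \<le> k \<and> F False (k-1) + 1 = F False k) \<or> F True k + 1 = F False k" by simp
      then show ?thesis
      proof
        assume h: "1 \<le> k \<and> F False (k-1) + 1 = F False k"
        have E: "GP_E n 3 a (False, k-1)" using bk False h k by (simp add: GP_E_def)
        have "MF F n (False, k-1) \<le> F False (k-1)" by (simp add: MF_def)
        moreover have V: "(False, k-1) \<in> GP_V n" using k by (simp add: GP_V_def)
        ultimately show ?thesis using E h M False by force
      next
        assume h: "F True k + 1 = F False k"
        have E: "GP_E n 3 a (True, k)" using bk False by (simp add: GP_E_def)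
        have "MF F n (True, k) \<le> F True k" by (simp add: MF_def)
        moreover have V: "(True, k) \<in> GP_V n" using k by (simp add: GP_V_def)
        ultimately show ?thesis using E h M False by force
      qed
    next
      case True
      from goodF_D(9)[OF G, of k] ne bk True
      have "(3 \<le> k \<and> F True (k-3) + 1 = F True k) \<or> F False k + 1 = F True k" by simp
      then show ?thesis
      proof
        assume h: "3 \<le> k \<and> F True (k-3) + 1 = F True k"
        have E: "GP_E n 3 a (True, k-3)" using bk True h k by (simp add: GP_E_def)
        have "MF F n (True, k-3) \<le> F True (k-3)" by (simp add: MF_def)
        moreover have V: "(True, k-3) \<in> GP_V n" using k by (simp add: GP_V_def)
        ultimately show ?thesis using E h M True by force
      next
        assume h: "F False k + 1 = F True k"
        have E: "GP_E n 3 a (False, k)" using bk True by (simp add: GP_E_def)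
        have "MF F n (False, k) \<le> F False k" by (simp add: MF_def)
        moreover have V: "(False, k) \<in> GP_V n" using k by (simp add: GP_V_def)
        ultimately show ?thesis using E h M True by force
      qed
    qed
  next
    case False
    then have M: "MF F n a = F b (n-k)" using bk by (simp add: MF_def)
    define j where "j = n - k"
    have j1: "1 \<le> j" using k j_def by simp
    show ?thesis
    proof (cases b)
      case False
      from goodF_D(8)[OF G, of j] j1
      have "(1 \<le> j \<and> F False (j-1) + 1 = F False j) \<or> F True j + 1 = F False j" by simp
      then show ?thesis
      proof
        assume h: "1 \<le> j \<and> F False (j-1) + 1 = F False j"
        have E: "GP_E n 3 a (False, (k+1) mod n)" using bk False by (simp add: GP_E_def)
        have "MF F n (False, (k+1) mod n) \<le> F False (j-1)"
        proof (cases "k + 1 < n")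
          case True then show ?thesis unfolding MF_def j_def by simp
        next
          case False then have "k + 1 = n" using k by simp
          then show ?thesis unfolding MF_def j_def by simp
        qed
        moreover have V: "(False, (k+1) mod n) \<in> GP_V n" using k by (simp add: GP_V_def)
        ultimately show ?thesis using E h M False j_def by force
      next
        assume h: "F True j + 1 = F False j"
        have E: "GP_E n 3 a (True, k)" using bk False by (simp add: GP_E_def)
        have "MF F n (True, k) \<le> F True j" by (simp add: MF_def j_def)
        moreover have V: "(True, k) \<in> GP_V n" using k by (simp add: GP_V_def)
        ultimately show ?thesis using E h M False j_def by force
      qed
    next
      case True
      from goodF_D(9)[OF G, of j] j1
      have "(3 \<le> j \<and> F True (j-3) + 1 = F True j) \<or> F False j + 1 = F True j" by simp
      then show ?thesis
      proof
        assume h: "3 \<le> j \<and> F True (j-3) + 1 = F True j"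
        have E: "GP_E n 3 a (True, (k+3) mod n)" using bk True by (simp add: GP_E_def)
        have "MF F n (True, (k+3) mod n) \<le> F True (j-3)"
        proof (cases "k + 3 < n")
          case True then show ?thesis unfolding MF_def j_def by simp
        next
          case False
          have "3 \<le> j" using h by simp
          then have "k + 3 = n" using False j_def by linarith
          then show ?thesis unfolding MF_def j_def by simp
        qed
        moreover have V: "(True, (k+3) mod n) \<in> GP_V n" using k by (simp add: GP_V_def)
        ultimately show ?thesis using E h M True j_def by force
      next
        assume h: "F False j + 1 = F True j"
        have E: "GP_E n 3 a (False, k)" using bk True by (simp add: GP_E_def)
        have "MF F n (False, k) \<le> F False j" by (simp add: MF_def j_def)
        moreover have V: "(False, k) \<in> GP_V n" using k by (simp add: GP_V_def)
        ultimately show ?thesis using E h M True j_def by force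
      qed
    qed
  qed
  then obtain a' where a': "a' \<in> GP_V n" "GP_E n 3 a a'" "MF F n a' + 1 \<le> MF F n a" by blast
  have "near (MF F n a) (MF F n a')" using GP_lip[OF G n a a'(1) a'(2)] .
  then have "MF F n a' + 1 = MF F n a" using a'(3) by (simp add: near_def)
  then show ?thesis using a' by blast
qed

lemma GP_cert:
  assumes G: "goodF t F" and n: "17 \<le> n" and a: "a \<in> GP_V n"
  shows "gdist (GP_V n) (GP_E n 3) a (t,0) = MF F n a"
proof (rule gdist_cert)
  show "(t,0) \<in> GP_V n" using n by (simp add: GP_V_def)
  show "MF F n (t,0) = 0" using goodF_D(7)[OF G] by (simp add: MF_def)
  show "\<forall>u\<in>GP_V n. \<forall>v\<in>GP_V n. GP_E n 3 u v \<longrightarrow> MF F n u \<le> MF F n v + 1"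
    using GP_lip[OF G n] by (simp add: near_def)
  show "\<forall>a\<in>GP_V n. a \<noteq> (t,0) \<longrightarrow> (\<exists>b\<in>GP_V n. GP_E n 3 a b \<and> MF F n b + 1 = MF F n a)"
    using GP_desc[OF G n] by blast
  show "a \<in> GP_V n" by fact
qed


section \<open>Rotation\<close>

definition rot :: "nat \<Rightarrow> bool \<times> nat \<Rightarrow> bool \<times> nat" where
  "rot n w = (fst w, (snd w + 1) mod n)"

lemma modsuc_inj:
  fixes a b n :: nat
  assumes "a < n" "b < n"
  shows "((a+1) mod n = (b+1) mod n) \<longleftrightarrow> a = b"
proof
  assume h: "(a+1) mod n = (b+1) mod n"
  show "a = b"
  proof (cases "a + 1 = n")
    case True
    then have "(a+1) mod n = 0" by simp
    then have "(b+1) mod n = 0" using h by simp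
    then have "b + 1 = n" using assms by (metis Suc_eq_plus1 Suc_leI le_neq_implies_less mod_less nat.simps(3))
    then show ?thesis using True by simp
  next
    case False
    then have "(a+1) mod n = a + 1" using assms by simp
    moreover have "b + 1 \<noteq> n"
    proof
      assume "b + 1 = n" then have "(b+1) mod n = 0" by simp
      then show False using h \<open>(a+1) mod n = a + 1\<close> by simp
    qed
    then have "(b+1) mod n = b + 1" using assms by simp
    ultimately show ?thesis using h by simp
  qed
qed simp

lemma shift_eq:
  fixes i i' d n :: nat
  assumes "i < n" "i' < n"
  shows "(i' = (i+d) mod n) \<longleftrightarrow> ((i'+1) mod n = ((i+1) mod n + d) mod n)"
proof -
  have n0: "0 < n" using assms by simp
  have "((i+1) mod n + d) mod n = ((i+d) mod n + 1) mod n"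
    by (metis add.commute add.left_commute mod_add_left_eq)
  then have "((i'+1) mod n = ((i+1) mod n + d) mod n) \<longleftrightarrow> ((i'+1) mod n = ((i+d) mod n + 1) mod n)"
    by simp
  also have "\<dots> \<longleftrightarrow> i' = (i+d) mod n" using modsuc_inj[OF assms(2), of "(i+d) mod n"] n0 by simp
  finally show ?thesis by simp
qed

lemma rot_E:
  assumes "i < n" "i' < n"
  shows "GP_E n 3 (b,i) (b',i') \<longleftrightarrow> GP_E n 3 (rot n (b,i)) (rot n (b',i'))"
proof -
  have A: "(i' = (i+1) mod n) \<longleftrightarrow> ((i'+1) mod n = ((i+1) mod n + 1) mod n)" using shift_eq[OF assms] .
  have B: "(i = (i'+1) mod n) \<longleftrightarrow> ((i+1) mod n = ((i'+1) mod n + 1) mod n)" using shift_eq[OF assms(2,1)] .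
  have C: "(i' = (i+3) mod n) \<longleftrightarrow> ((i'+1) mod n = ((i+1) mod n + 3) mod n)" using shift_eq[OF assms] .
  have D: "(i = (i'+3) mod n) \<longleftrightarrow> ((i+1) mod n = ((i'+1) mod n + 3) mod n)" using shift_eq[OF assms(2,1)] .
  have S: "(i = i') \<longleftrightarrow> ((i+1) mod n = (i'+1) mod n)" using modsuc_inj[OF assms] by simp
  show ?thesis unfolding GP_E_cases rot_def using A B C D S by auto
qed

lemma rot_V: "w \<in> GP_V n \<Longrightarrow> rot n w \<in> GP_V n"
  by (auto simp: GP_V_def rot_def)

lemma rot_inj: "w \<in> GP_V n \<Longrightarrow> w' \<in> GP_V n \<Longrightarrow> rot n w = rot n w' \<Longrightarrow> w = w'"
  using modsuc_inj by (auto simp: GP_V_def rot_def prod_eq_iff)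

lemma rot_surj: "z \<in> GP_V n \<Longrightarrow> \<exists>z0\<in>GP_V n. rot n z0 = z"
proof -
  assume z: "z \<in> GP_V n"
  obtain b k where bk: "z = (b,k)" by force
  have k: "k < n" using z bk by (auto simp: GP_V_def)
  define k0 where "k0 = (if k = 0 then n - 1 else k - 1)"
  have "k0 < n" "(k0 + 1) mod n = k" using k by (auto simp: k0_def)
  then show ?thesis using bk by (intro bexI[of _ "(b,k0)"]) (auto simp: rot_def GP_V_def)
qed

lemma rot_E': "a \<in> GP_V n \<Longrightarrow> z \<in> GP_V n \<Longrightarrow> GP_E n 3 a z \<longleftrightarrow> GP_E n 3 (rot n a) (rot n z)"
  using rot_E by (cases a; cases z) (auto simp: GP_V_def)

lemma walk_rot:
  assumes y: "y \<in> GP_V n"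
  shows "a \<in> GP_V n \<Longrightarrow> walk (GP_V n) (GP_E n 3) a y m \<longleftrightarrow> walk (GP_V n) (GP_E n 3) (rot n a) (rot n y) m"
proof (induction m arbitrary: a)
  case 0
  then show ?case using rot_inj[OF 0 y] rot_V[OF 0] by auto
next
  case (Suc m)
  show ?case
  proof
    assume "walk (GP_V n) (GP_E n 3) a y (Suc m)"
    then obtain z where z: "z \<in> GP_V n" "GP_E n 3 a z" "walk (GP_V n) (GP_E n 3) z y m" by auto
    then have "walk (GP_V n) (GP_E n 3) (rot n z) (rot n y) m" using Suc.IH by blast
    moreover have "GP_E n 3 (rot n a) (rot n z)" using rot_E'[OF Suc.prems z(1)] z(2) by simp
    ultimately show "walk (GP_V n) (GP_E n 3) (rot n a) (rot n y) (Suc m)"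
      using rot_V[OF Suc.prems] rot_V[OF z(1)] by auto
  next
    assume "walk (GP_V n) (GP_E n 3) (rot n a) (rot n y) (Suc m)"
    then obtain z where z: "z \<in> GP_V n" "GP_E n 3 (rot n a) z" "walk (GP_V n) (GP_E n 3) z (rot n y) m" by auto
    obtain z0 where z0: "z0 \<in> GP_V n" "rot n z0 = z" using rot_surj[OF z(1)] by blast
    have "walk (GP_V n) (GP_E n 3) z0 y m" using Suc.IH[OF z0(1)] z(3) z0(2) by simp
    moreover have "GP_E n 3 a z0" using rot_E'[OF Suc.prems z0(1)] z(2) z0(2) by simp
    ultimately show "walk (GP_V n) (GP_E n 3) a y (Suc m)" using Suc.prems z0(1) by auto
  qed
qed

lemma gdist_rot:
  assumes "a \<in> GP_V n" "y \<in> GP_V n"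
  shows "gdist (GP_V n) (GP_E n 3) a y = gdist (GP_V n) (GP_E n 3) (rot n a) (rot n y)"
proof -
  have "walk (GP_V n) (GP_E n 3) a y = walk (GP_V n) (GP_E n 3) (rot n a) (rot n y)"
    using walk_rot[OF assms(2) assms(1)] by (intro ext) simp
  then show ?thesis unfolding gdist_def by simp
qed


section \<open>Counting\<close>

definition sg :: "nat \<Rightarrow> nat \<Rightarrow> int" where "sg a b = (if a < b then 1 else if b < a then -1 else 0)"
definition ccLR :: "nat \<Rightarrow> nat \<Rightarrow> int" where
 "ccLR L R = sg (min (hv L) (hv R)) (min (hu (L+1)) (hu (R-1)))
         + sg (min (hvv L) (hvv R)) (min (hv (L+1)) (hv (R-1)))"

lemma gx:
  assumes "17 \<le> n" "w \<in> GP_V n"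
  shows "gdist (GP_V n) (GP_E n 3) w (True,0) = MF Fx n w"
  by (rule GP_cert[OF goodFx assms])

lemma gy: "17 \<le> n \<Longrightarrow> w \<in> GP_V n \<Longrightarrow> gdist (GP_V n) (GP_E n 3) w (False,n-1) = MF Fy n (rot n w)"
proof -
  assume n: "17 \<le> n" and w: "w \<in> GP_V n"
  have y: "(False, n-1) \<in> GP_V n" using n by (simp add: GP_V_def)
  have r: "rot n (False, n-1) = (False, 0)" using n by (simp add: rot_def)
  have "gdist (GP_V n) (GP_E n 3) w (False,n-1) = gdist (GP_V n) (GP_E n 3) (rot n w) (rot n (False,n-1))"
    by (rule gdist_rot[OF w y])
  also have "\<dots> = gdist (GP_V n) (GP_E n 3) (rot n w) (False,0)" unfolding r ..
  also have "\<dots> = MF Fy n (rot n w)" by (rule GP_cert[OF goodFy n rot_V[OF w]])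
  finally show ?thesis .
qed

lemma card_rows:
  "card {w \<in> GP_V n. P w} = card {i. i < n \<and> P (False,i)} + card {i. i < n \<and> P (True,i)}"
proof -
  have "{w \<in> GP_V n. P w} = Pair False ` {i. i < n \<and> P (False,i)} \<union> Pair True ` {i. i < n \<and> P (True,i)}"
  proof (rule set_eqI)
    fix w :: "bool \<times> nat"
    obtain b i where w: "w = (b,i)" by force
    show "w \<in> {w \<in> GP_V n. P w} \<longleftrightarrow> w \<in> Pair False ` {i. i < n \<and> P (False,i)} \<union> Pair True ` {i. i < n \<and> P (True,i)}"
      unfolding w by (cases b) (auto simp: GP_V_def)
  qed
  moreover have "card (Pair False ` {i. i < n \<and> P (False,i)}) = card {i. i < n \<and> P (False,i)}"
    by (rule card_image) (simp add: inj_on_def)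
  moreover have "card (Pair True ` {i. i < n \<and> P (True,i)}) = card {i. i < n \<and> P (True,i)}"
    by (rule card_image) (simp add: inj_on_def)
  moreover have "Pair False ` {i. i < n \<and> P (False,i)} \<inter> Pair True ` {i. i < n \<and> P (True,i)} = {}" by auto
  ultimately show ?thesis by (simp add: card_Un_disjoint)
qed

lemma card_sum: "int (card {i. i < (n::nat) \<and> Q i}) = (\<Sum>i<n. if Q i then 1 else 0)"
proof -
  have e: "{i. i < n \<and> Q i} = {i \<in> {..<n}. Q i}" by auto
  have "card {i \<in> {..<n}. Q i} = (\<Sum>i\<in>{i \<in> {..<n}. Q i}. (1::nat))" by (rule card_eq_sum)
  also have "\<dots> = (\<Sum>i<n. if Q i then 1 else 0)" by (rule sum.inter_filter) (rule finite_lessThan)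
  finally have c: "card {i. i < n \<and> Q i} = (\<Sum>i<n. if Q i then 1 else (0::nat))" by (simp only: e)
  have "int (card {i. i < n \<and> Q i}) = (\<Sum>i<n. int (if Q i then 1 else 0))" unfolding c by (rule of_nat_sum)
  also have "\<dots> = (\<Sum>i<n. if Q i then 1 else 0)" by (rule sum.cong) auto
  finally show ?thesis .
qed

lemma Dy_eq: "i < n \<Longrightarrow> MF Fy n (rot n (b,i)) = min (Fy b (i+1)) (Fy b (n - (i+1)))"
proof (cases "i + 1 < n")
  case True then show ?thesis by (simp add: MF_def rot_def)
next
  case False
  assume "i < n"
  then have i1: "i + 1 = n" using False by simp
  then have "rot n (b,i) = (b,0)" by (simp add: rot_def)
  then have "MF Fy n (rot n (b,i)) = min (Fy b 0) (Fy b n)" by (simp add: MF_def)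
  also have "\<dots> = min (Fy b n) (Fy b 0)" by (rule min.commute)
  also have "\<dots> = min (Fy b (i+1)) (Fy b (n - (i+1)))" using i1 by simp
  finally show ?thesis .
qed

lemma count:
  assumes n: "17 \<le> n"
  shows "int (card (Wset (GP_V n) (GP_E n 3) (True,0) (False,n-1)))
       - int (card (Wset (GP_V n) (GP_E n 3) (False,n-1) (True,0))) = (\<Sum>i<n. ccLR i (n-i))"
proof -
  let ?V = "GP_V n" and ?E = "GP_E n 3"
  define P where "P w \<longleftrightarrow> MF Fx n w < MF Fy n (rot n w)" for w
  define Q where "Q w \<longleftrightarrow> MF Fy n (rot n w) < MF Fx n w" for w
  have W1: "Wset ?V ?E (True,0) (False,n-1) = {w \<in> ?V. P w}"
    unfolding Wset_def P_def using gx[OF n] gy[OF n] by auto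
  have W2: "Wset ?V ?E (False,n-1) (True,0) = {w \<in> ?V. Q w}"
    unfolding Wset_def Q_def using gx[OF n] gy[OF n] by auto
  have "int (card {w \<in> ?V. P w}) - int (card {w \<in> ?V. Q w})
      = (\<Sum>i<n. if P (False,i) then 1 else 0) + (\<Sum>i<n. if P (True,i) then 1 else 0)
      - ((\<Sum>i<n. if Q (False,i) then 1 else 0) + (\<Sum>i<n. if Q (True,i) then 1 else 0))"
    unfolding card_rows by (simp add: card_sum)
  also have "\<dots> = (\<Sum>i<n. ((if P (False,i) then 1 else 0) - (if Q (False,i) then 1 else 0))
        + ((if P (True,i) then 1 else 0) - (if Q (True,i) then 1 else 0)))"
    by (simp add: sum.distrib sum_subtractf)
  also have "\<dots> = (\<Sum>i<n. ccLR i (n-i))"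
  proof (rule sum.cong)
    fix i assume "i \<in> {..<n}"
    then have i: "i < n" by simp
    have e: "n - (i+1) = n - i - 1" by simp
    have r: "\<And>b. (if P (b,i) then 1 else 0) - (if Q (b,i) then 1 else 0) = sg (MF Fx n (b,i)) (MF Fy n (rot n (b,i)))"
      unfolding P_def Q_def sg_def by simp
    show "((if P (False,i) then 1 else 0) - (if Q (False,i) then 1 else 0))
        + ((if P (True,i) then 1 else 0) - (if Q (True,i) then 1 else 0)) = ccLR i (n-i)"
      unfolding r Dy_eq[OF i] ccLR_def e by (simp add: MF_def Fx_def Fy_def)
  qed simp
  finally show ?thesis using W1 W2 by simp
qed


section \<open>Summation\<close>

definition W3 :: "nat \<Rightarrow> nat \<Rightarrow> int" where "W3 L R = ccLR L R + ccLR (L+1) (R-1) + ccLR (L+2) (R-2)"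
definition ccL :: "nat \<Rightarrow> int" where "ccL L = sg (hv L) (hu (L+1)) + sg (hvv L) (hv (L+1))"
definition ccR :: "nat \<Rightarrow> int" where "ccR R = sg (hv R) (hu (R-1)) + sg (hvv R) (hv (R-1))"

lemma sg_shift: "sg (min (a+1) (b+1)) (min (c+1) (d+1)) = sg (min a b) (min c d)"
  unfolding sg_def by (simp add: min_def)

lemma cc_shift:
  assumes "3 \<le> L" "4 \<le> R"
  shows "ccLR (L+3) (R+3) = ccLR L R"
proof -
  have e1: "L + 3 + 1 = (L+1) + 3" by simp
  have e2: "R + 3 - 1 = (R-1) + 3" using assms by simp
  have a1: "hv (L+3) = hv L + 1" "hv (R+3) = hv R + 1" "hvv (L+3) = hvv L + 1" "hvv (R+3) = hvv R + 1"
    by (simp_all add: hv_p3 hvv_p3)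
  have a2: "hu (L+3+1) = hu (L+1) + 1" unfolding e1 using assms by (intro hu_p3) simp
  have a3: "hu (R+3-1) = hu (R-1) + 1" unfolding e2 using assms by (intro hu_p3) simp
  have a4: "hv (L+3+1) = hv (L+1) + 1" unfolding e1 by (rule hv_p3)
  have a5: "hv (R+3-1) = hv (R-1) + 1" unfolding e2 by (rule hv_p3)
  show ?thesis unfolding ccLR_def a1 a2 a3 a4 a5 sg_shift ..
qed

lemma W3_shift:
  assumes "3 \<le> L" "6 \<le> R"
  shows "W3 (L+3) (R+3) = W3 L R"
proof -
  have e1: "L + 3 + 1 = (L+1) + 3" "R + 3 - 1 = (R-1) + 3" "L + 3 + 2 = (L+2) + 3" "R + 3 - 2 = (R-2) + 3"
    using assms by simp_all
  have "ccLR (L+3) (R+3) = ccLR L R" using assms by (intro cc_shift) simp_all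
  moreover have "ccLR ((L+1)+3) ((R-1)+3) = ccLR (L+1) (R-1)" using assms by (intro cc_shift) simp_all
  moreover have "ccLR ((L+2)+3) ((R-2)+3) = ccLR (L+2) (R-2)" using assms by (intro cc_shift) simp_all
  ultimately show ?thesis unfolding W3_def e1 by simp
qed

lemma div_small: "j \<le> 14 \<Longrightarrow> j div 3 \<le> (4::nat)"
  using div_le_mono[of j 14 3] by simp
lemma div_big: "24 \<le> j \<Longrightarrow> (8::nat) \<le> j div 3"
  using div_le_mono[of 24 j 3] by simp

lemma F_small: "j \<le> 14 \<Longrightarrow> hu j \<le> 8 \<and> hv j \<le> 8 \<and> hvv j \<le> 8"
  using div_small[of j] hu_bounds[of j] hv_bounds[of j] hvv_bounds[of j] by linarith
lemma F_big: "24 \<le> j \<Longrightarrow> 8 \<le> hu j \<and> 8 \<le> hv j \<and> 8 \<le> hvv j"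
  using div_big[of j] hu_bounds[of j] hv_bounds[of j] hvv_bounds[of j] by linarith

lemma ccL_dom:
  assumes "L \<le> 13" "25 \<le> R"
  shows "ccLR L R = ccL L"
proof -
  have "hv L \<le> hv R" "hvv L \<le> hvv R" "hu (L+1) \<le> hu (R-1)" "hv (L+1) \<le> hv (R-1)"
    using F_small[of L] F_small[of "L+1"] F_big[of R] F_big[of "R-1"] assms by linarith+
  then show ?thesis unfolding ccLR_def ccL_def by (simp add: min_def)
qed

lemma ccR_dom:
  assumes "25 \<le> L" "1 \<le> R" "R \<le> 13"
  shows "ccLR L R = ccR R"
proof -
  have "hv R \<le> hv L" "hvv R \<le> hvv L" "hu (R-1) \<le> hu (L+1)" "hv (R-1) \<le> hv (L+1)"
    using F_small[of R] F_small[of "R-1"] F_big[of L] F_big[of "L+1"] assms by linarith+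
  then show ?thesis unfolding ccLR_def ccR_def by (simp add: min_def)
qed

lemma finL9: "9 \<le> R \<Longrightarrow> R < 27 \<Longrightarrow> 0 \<le> W3 9 R"
proof -
  assume "9 \<le> R" "R < 27"
  then have "R = 9 \<or> R = 10 \<or> R = 11 \<or> R = 12 \<or> R = 13 \<or> R = 14 \<or> R = 15 \<or> R = 16 \<or> R = 17 \<or> R = 18 \<or> R = 19 \<or> R = 20 \<or> R = 21 \<or> R = 22 \<or> R = 23 \<or> R = 24 \<or> R = 25 \<or> R = 26" by arith
  then show ?thesis by (elim disjE) (simp_all add: W3_def ccLR_def ccL_def ccR_def sg_def hu_def hv_def hvv_def g_def)
qed

lemma finL10: "9 \<le> R \<Longrightarrow> R < 27 \<Longrightarrow> 0 \<le> W3 10 R"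
proof -
  assume "9 \<le> R" "R < 27"
  then have "R = 9 \<or> R = 10 \<or> R = 11 \<or> R = 12 \<or> R = 13 \<or> R = 14 \<or> R = 15 \<or> R = 16 \<or> R = 17 \<or> R = 18 \<or> R = 19 \<or> R = 20 \<or> R = 21 \<or> R = 22 \<or> R = 23 \<or> R = 24 \<or> R = 25 \<or> R = 26" by arith
  then show ?thesis by (elim disjE) (simp_all add: W3_def ccLR_def ccL_def ccR_def sg_def hu_def hv_def hvv_def g_def)
qed

lemma finL11: "9 \<le> R \<Longrightarrow> R < 27 \<Longrightarrow> 0 \<le> W3 11 R"
proof -
  assume "9 \<le> R" "R < 27"
  then have "R = 9 \<or> R = 10 \<or> R = 11 \<or> R = 12 \<or> R = 13 \<or> R = 14 \<or> R = 15 \<or> R = 16 \<or> R = 17 \<or> R = 18 \<or> R = 19 \<or> R = 20 \<or> R = 21 \<or> R = 22 \<or> R = 23 \<or> R = 24 \<or> R = 25 \<or> R = 26" by arith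
  then show ?thesis by (elim disjE) (simp_all add: W3_def ccLR_def ccL_def ccR_def sg_def hu_def hv_def hvv_def g_def)
qed

lemma finR9: "12 \<le> L \<Longrightarrow> L < 25 \<Longrightarrow> 0 \<le> W3 L 9"
proof -
  assume "12 \<le> L" "L < 25"
  then have "L = 12 \<or> L = 13 \<or> L = 14 \<or> L = 15 \<or> L = 16 \<or> L = 17 \<or> L = 18 \<or> L = 19 \<or> L = 20 \<or> L = 21 \<or> L = 22 \<or> L = 23 \<or> L = 24" by arith
  then show ?thesis by (elim disjE) (simp_all add: W3_def ccLR_def ccL_def ccR_def sg_def hu_def hv_def hvv_def g_def)
qed

lemma finR10: "12 \<le> L \<Longrightarrow> L < 25 \<Longrightarrow> 0 \<le> W3 L 10"
proof -
  assume "12 \<le> L" "L < 25"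
  then have "L = 12 \<or> L = 13 \<or> L = 14 \<or> L = 15 \<or> L = 16 \<or> L = 17 \<or> L = 18 \<or> L = 19 \<or> L = 20 \<or> L = 21 \<or> L = 22 \<or> L = 23 \<or> L = 24" by arith
  then show ?thesis by (elim disjE) (simp_all add: W3_def ccLR_def ccL_def ccR_def sg_def hu_def hv_def hvv_def g_def)
qed

lemma finR11: "12 \<le> L \<Longrightarrow> L < 25 \<Longrightarrow> 0 \<le> W3 L 11"
proof -
  assume "12 \<le> L" "L < 25"
  then have "L = 12 \<or> L = 13 \<or> L = 14 \<or> L = 15 \<or> L = 16 \<or> L = 17 \<or> L = 18 \<or> L = 19 \<or> L = 20 \<or> L = 21 \<or> L = 22 \<or> L = 23 \<or> L = 24" by arith
  then show ?thesis by (elim disjE) (simp_all add: W3_def ccLR_def ccL_def ccR_def sg_def hu_def hv_def hvv_def g_def)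
qed

lemma W3_nonneg: "9 \<le> L \<Longrightarrow> 9 \<le> R \<Longrightarrow> 0 \<le> W3 L R"
proof (induction L arbitrary: R rule: less_induct)
  case (less L)
  show ?case
  proof (cases "12 \<le> L \<and> 12 \<le> R")
    case True
    then have "W3 ((L-3)+3) ((R-3)+3) = W3 (L-3) (R-3)" by (intro W3_shift) auto
    moreover have "(L-3)+3 = L" "(R-3)+3 = R" using True by auto
    moreover have "0 \<le> W3 (L-3) (R-3)"
    proof -
      have h: "L - 3 < L" "9 \<le> L - 3" "9 \<le> R - 3" using True by auto
      show ?thesis using less.IH[OF h] .
    qed
    ultimately show ?thesis by simp
  next
    case False
    then have "L < 12 \<or> (12 \<le> L \<and> R < 12)" by auto
    then show ?thesis
    proof
      assume L: "L < 12"
      then have L3: "L = 9 \<or> L = 10 \<or> L = 11" using less.prems by auto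
      show ?thesis
      proof (cases "R < 27")
        case True then show ?thesis using L3 finL9 finL10 finL11 less.prems by auto
      next
        case False
        then have "ccLR L R = ccL L" "ccLR (L+1) (R-1) = ccL (L+1)" "ccLR (L+2) (R-2) = ccL (L+2)"
          using L by (intro ccL_dom; simp)+
        then have "W3 L R = ccL L + ccL (L+1) + ccL (L+2)" unfolding W3_def by simp
        moreover have "0 \<le> ccL 9 + ccL 10 + ccL 11" "0 \<le> ccL 10 + ccL 11 + ccL 12" "0 \<le> ccL 11 + ccL 12 + ccL 13"
          by (simp_all add: ccL_def sg_def hu_def hv_def hvv_def g_def)
        ultimately show ?thesis using L3 by auto
      qed
    next
      assume LR: "12 \<le> L \<and> R < 12"
      then have R3: "R = 9 \<or> R = 10 \<or> R = 11" using less.prems by auto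
      show ?thesis
      proof (cases "L < 25")
        case True then show ?thesis using R3 finR9 finR10 finR11 LR by auto
      next
        case False
        then have "ccLR L R = ccR R" "ccLR (L+1) (R-1) = ccR (R-1)" "ccLR (L+2) (R-2) = ccR (R-2)"
          using LR R3 by (intro ccR_dom; auto)+
        then have "W3 L R = ccR R + ccR (R-1) + ccR (R-2)" unfolding W3_def by simp
        moreover have "0 \<le> ccR 9 + ccR 8 + ccR 7" "0 \<le> ccR 10 + ccR 9 + ccR 8" "0 \<le> ccR 11 + ccR 10 + ccR 9"
          by (simp_all add: ccR_def sg_def hu_def hv_def hvv_def g_def)
        ultimately show ?thesis using R3 by auto
      qed
    qed
  qed
qed


definition Sm :: "nat \<Rightarrow> nat \<Rightarrow> int" where "Sm n m = (\<Sum>i<m. ccLR i (n-i))"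

lemma Sm_num: "Sm n (m+1) = Sm n m + ccLR m (n-m)"
  by (simp add: Sm_def)

lemma Sm_3: "Sm n (m+3) = Sm n m + W3 m (n-m)"
proof -
  have a: "Sm n (Suc (Suc (Suc m))) = Sm n m + ccLR m (n-m) + ccLR (Suc m) (n - Suc m) + ccLR (Suc (Suc m)) (n - Suc (Suc m))"
    by (simp add: Sm_def)
  have b: "m + 3 = Suc (Suc (Suc m))" "m + 1 = Suc m" "m + 2 = Suc (Suc m)" "n - m - 1 = n - Suc m" "n - m - 2 = n - Suc (Suc m)"
    by simp_all
  show ?thesis unfolding W3_def b a by simp
qed

lemma Sm_9: "Sm n 9 = ccLR 0 (n-0) + ccLR 1 (n-1) + ccLR 2 (n-2) + ccLR 3 (n-3) + ccLR 4 (n-4) + ccLR 5 (n-5) + ccLR 6 (n-6) + ccLR 7 (n-7) + ccLR 8 (n-8)"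
  by (simp add: Sm_def eval_nat_numeral)

lemma Sm_10: "Sm n 10 = Sm n 9 + ccLR 9 (n-9)"
  by (simp add: Sm_def eval_nat_numeral)

lemma Sm_11: "Sm n 11 = Sm n 10 + ccLR 10 (n-10)"
  by (simp add: Sm_def eval_nat_numeral)

lemma D1:
  assumes n: "17 \<le> n"
  shows "4 \<le> Sm n 9 \<and> 4 \<le> Sm n 10 \<and> 4 \<le> Sm n 11"
proof -
  note e10 = Sm_10[of n] and e11 = Sm_11[of n]
  show ?thesis
  proof (cases "35 \<le> n")
    case True
    have c: "\<And>i. i \<le> 10 \<Longrightarrow> ccLR i (n-i) = ccL i" using True by (intro ccL_dom) auto
    have "4 \<le> ccL 0 + ccL 1 + ccL 2 + ccL 3 + ccL 4 + ccL 5 + ccL 6 + ccL 7 + ccL 8" 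
         "4 \<le> ccL 0 + ccL 1 + ccL 2 + ccL 3 + ccL 4 + ccL 5 + ccL 6 + ccL 7 + ccL 8 + ccL 9"
         "4 \<le> ccL 0 + ccL 1 + ccL 2 + ccL 3 + ccL 4 + ccL 5 + ccL 6 + ccL 7 + ccL 8 + ccL 9 + ccL 10"
      by (simp_all add: ccL_def sg_def hu_def hv_def hvv_def g_def)
    moreover have "ccLR 0 n = ccL 0" using c[of 0] by simp
    ultimately show ?thesis unfolding e11 e10 Sm_9 using c by simp
  next
    case False
    then have "n = 17 \<or> n = 18 \<or> n = 19 \<or> n = 20 \<or> n = 21 \<or> n = 22 \<or> n = 23 \<or> n = 24 \<or> n = 25 \<or> n = 26 \<or> n = 27 \<or> n = 28 \<or> n = 29 \<or> n = 30 \<or> n = 31 \<or> n = 32 \<or> n = 33 \<or> n = 34" using n by arith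
    then show ?thesis unfolding e11 e10 Sm_9 by (elim disjE) (simp_all add: ccLR_def ccL_def ccR_def sg_def hu_def hv_def hvv_def g_def)
  qed
qed

lemma S_ge4: "17 \<le> n \<Longrightarrow> 9 \<le> m \<Longrightarrow> m + 6 \<le> n \<Longrightarrow> 4 \<le> Sm n m"
proof (induction m rule: less_induct)
  case (less m)
  show ?case
  proof (cases "m \<le> 11")
    case True
    then have "m = 9 \<or> m = 10 \<or> m = 11" using less.prems by auto
    then show ?thesis using D1[OF less.prems(1)] by auto
  next
    case False
    have h: "m - 3 < m" "17 \<le> n" "9 \<le> m - 3" "m - 3 + 6 \<le> n" using False less.prems by auto
    have "Sm n m = Sm n (m-3) + W3 (m-3) (n-(m-3))" using Sm_3[of n "m-3"] False by simp
    moreover have "0 \<le> W3 (m-3) (n-(m-3))" using False less.prems by (intro W3_nonneg) auto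
    moreover have "4 \<le> Sm n (m-3)" using less.IH[OF h] .
    ultimately show ?thesis by simp
  qed
qed

lemma D3:
  assumes n: "17 \<le> n"
  shows "Sm n n = Sm n (n-6) - 3"
proof -
  define m where "m = n - 6"
  have nm: "n = m + 6" "n - m = 6" "n - (m+3) = 3" using n m_def by simp_all
  have "Sm n (m+6) = Sm n (m+3) + W3 (m+3) (n-(m+3))" using Sm_3[of n "m+3"] by (simp add: add.assoc)
  then have e: "Sm n n = Sm n m + W3 m 6 + W3 (m+3) 3" using Sm_3[of n m] nm by simp
  have "W3 m 6 + W3 (m+3) 3 = -3"
  proof (cases "25 \<le> m")
    case True
    have "W3 m 6 = ccR 6 + ccR 5 + ccR 4" unfolding W3_def using True by (simp add: ccR_dom)
    moreover have "W3 (m+3) 3 = ccR 3 + ccR 2 + ccR 1" unfolding W3_def using True by (simp add: ccR_dom)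
    moreover have "ccR 6 + ccR 5 + ccR 4 + (ccR 3 + ccR 2 + ccR 1) = -3"
      by (simp add: ccR_def sg_def hu_def hv_def hvv_def g_def)
    ultimately show ?thesis by simp
  next
    case False
    then have "m = 11 \<or> m = 12 \<or> m = 13 \<or> m = 14 \<or> m = 15 \<or> m = 16 \<or> m = 17 \<or> m = 18 \<or> m = 19 \<or> m = 20 \<or> m = 21 \<or> m = 22 \<or> m = 23 \<or> m = 24" using n m_def by arith
    then show ?thesis by (elim disjE) (simp_all add: W3_def ccLR_def ccL_def ccR_def sg_def hu_def hv_def hvv_def g_def)
  qed
  then show ?thesis using e m_def by simp
qed

theorem proposition2p2:
  fixes n :: nat
  assumes "n > 16"
  shows "\<not> distance_balanced 2 (GP_V n) (GP_E n 3)"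
proof
  assume db: "distance_balanced 2 (GP_V n) (GP_E n 3)"
  have n: "17 \<le> n" using assms by simp
  have xV: "(True,0) \<in> GP_V n" and yV: "(False,n-1) \<in> GP_V n" using n by (simp_all add: GP_V_def)
  have "gdist (GP_V n) (GP_E n 3) (True,0) (False,n-1) = MF Fy n (rot n (True,0))" by (rule gy[OF n xV])
  also have "rot n (True,0) = (True,1)" using n by (simp add: rot_def)
  also have "MF Fy n (True,1) = min (hv 1) (hv (n-1))" by (simp add: MF_def Fy_def)
  also have "\<dots> = 2"
  proof -
    have "5 \<le> (n-1) div 3" using div_le_mono[of 15 "n-1" 3] n by simp
    then have "5 \<le> hv (n-1)" using hv_bounds[of "n-1"] by linarith
    then show ?thesis using small_vals by simp
  qed
  finally have d2: "gdist (GP_V n) (GP_E n 3) (True,0) (False,n-1) = 2" .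
  have "card (Wset (GP_V n) (GP_E n 3) (True,0) (False,n-1)) = card (Wset (GP_V n) (GP_E n 3) (False,n-1) (True,0))"
    using db xV yV d2 unfolding distance_balanced_def by blast
  then have "(\<Sum>i<n. ccLR i (n-i)) = 0" using count[OF n] by simp
  moreover have "(\<Sum>i<n. ccLR i (n-i)) = Sm n n" by (simp add: Sm_def)
  moreover have "4 \<le> Sm n (n-6)" using S_ge4[OF n] n by simp
  ultimately show False using D3[OF n] by simp
qed

end
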